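(* Over all 3-periodics of $\mathcal{E}$, the orthocenter $X_4^\dagger$ of the focus-inversive triangle moves on the circle with center and radius \[C_4^\dagger=\left(c\left(-1+\rho^2\frac{(b^2+\delta)\delta}{a^2b^4}\right),0\right),\qquad R_4^\dagger=\rho^2\,\frac{c^2(b^2+\delta)}{ab^4}.\]
   Context: Let $a>b>0$ and let $\mathcal{E}$ be the ellipse $x^2/a^2+y^2/b^2=1$. Set $c=\sqrt{a^2-b^2}$, $\delta=\sqrt{a^4-a^2b^2+b^4}$, and let the foci be $f_1=(-c,0)$, $f_2=(c,0)$. A 3-periodic is a triangle $P_1P_2P_3$ with vertices on $\mathcal{E}$ such that at each vertex the normal to $\mathcal{E}$ bisects the angle formed by the two sides meeting at that vertex; these form a one-parameter family (one through every point of $\mathcal{E}$). Fix $\rho>0$; the focus-inversive triangle has vertices $P_i^\dagger=f_1+(\rho/d_{1,i})^2(P_i-f_1)$, $d_{1,i}=|P_i-f_1|$. *)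

theory Defs
  imports "HOL-Analysis.Analysis"
begin

type_synonym pt = "real \<times> real"

definition on_ellipse :: "real \<Rightarrow> real \<Rightarrow> pt \<Rightarrow> bool" where
  "on_ellipse a b P \<longleftrightarrow> (fst P)\<^sup>2 / a\<^sup>2 + (snd P)\<^sup>2 / b\<^sup>2 = 1"

text \<open>Outward normal vector of the ellipse at P (gradient of the defining function, up to a factor 2).\<close>
definition ell_normal :: "real \<Rightarrow> real \<Rightarrow> pt \<Rightarrow> pt" where
  "ell_normal a b P = (fst P / a\<^sup>2, snd P / b\<^sup>2)"

definition vec_angle :: "pt \<Rightarrow> pt \<Rightarrow> real" where
  "vec_angle u v = arccos ((u \<bullet> v) / (norm u * norm v))"

definition normal_bisects :: "real \<Rightarrow> real \<Rightarrow> pt \<Rightarrow> pt \<Rightarrow> pt \<Rightarrow> bool" where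
  "normal_bisects a b P Q R \<longleftrightarrow>
     vec_angle (ell_normal a b P) (Q - P) = vec_angle (ell_normal a b P) (R - P)"

definition three_periodic :: "real \<Rightarrow> real \<Rightarrow> pt \<Rightarrow> pt \<Rightarrow> pt \<Rightarrow> bool" where
  "three_periodic a b P1 P2 P3 \<longleftrightarrow>
     on_ellipse a b P1 \<and> on_ellipse a b P2 \<and> on_ellipse a b P3 \<and>
     P1 \<noteq> P2 \<and> P2 \<noteq> P3 \<and> P1 \<noteq> P3 \<and>
     normal_bisects a b P1 P2 P3 \<and> normal_bisects a b P2 P3 P1 \<and> normal_bisects a b P3 P1 P2"

definition invert :: "pt \<Rightarrow> real \<Rightarrow> pt \<Rightarrow> pt" where
  "invert f \<rho> P = f + ((\<rho> / dist P f)\<^sup>2) *\<^sub>R (P - f)"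

definition is_orthocenter :: "pt \<Rightarrow> pt \<Rightarrow> pt \<Rightarrow> pt \<Rightarrow> bool" where
  "is_orthocenter A B C H \<longleftrightarrow>
     (H - A) \<bullet> (B - C) = 0 \<and> (H - B) \<bullet> (C - A) = 0 \<and> (H - C) \<bullet> (A - B) = 0"

end

theory Submission
  imports Defs
begin



lemma coeffs:
  fixes e q K R E :: real
  assumes Q: "3*e - 2*q - 2*e^2*q + e*q^2 = 0"
    and K: "(1-e^2)*K = e*(2-e*q)*(1+e^2-e*q) + (1-e^2)*e/2" and R: "(1-e^2)*R = e^2*(2-e*q)"
    and E: "E = e/2"
  shows "e*(1-e^2)*(R - E*K - E*q - E*q*R + E^2*q^2) = 0"
    and "e^2*(1-e^2)*(K - q + q*R - 2*E - E*R - 2*E*q*K + E*q^2 - E*q^2*R + 2*E^2*q) = 0"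
    and "e^3*(1-e^2)*(- R - q*K + q^2 - q^2*R + E*K + 3*E*q + 2*E*q*R + 2*E*q^2*K - E*q^3 + E*q^3*R - 3*E^2*q^2) = 0"
    and "e^2*(1-e^2)*(- K + q - 2*q*R + 2*E + E*R + 3*E*q*K + 2*E*q^2*R - 2*E^2*q - E^2*q^3) = 0"
proof -
  have "e*(1-e^2)*(R - E*K - E*q - E*q*R + E^2*q^2) = e*(-(1/2)*e)*((1-e^2)*K - (e*(2-e*q)*(1+e^2-e*q) + (1-e^2)*e/2))
     + e*(1 - (1/2)*e*q)*((1-e^2)*R - e^2*(2-e*q)) + ((1/4)*e^2 - (1/4)*e^4)*(3*e - 2*q - 2*e^2*q + e*q^2)"
    by (simp add: E field_simps; algebra)
  then show "e*(1-e^2)*(R - E*K - E*q - E*q*R + E^2*q^2) = 0" using Q K R by simp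
  have "e^2*(1-e^2)*(K - q + q*R - 2*E - E*R - 2*E*q*K + E*q^2 - E*q^2*R + 2*E^2*q) =
     e^2*(1 - e*q)*((1-e^2)*K - (e*(2-e*q)*(1+e^2-e*q) + (1-e^2)*e/2))
     + e^2*(q - (1/2)*e - (1/2)*e*q^2)*((1-e^2)*R - e^2*(2-e*q)) + ((1/2)*e^2 + (1/2)*e^4 - (1/2)*e^5*q)*(3*e - 2*q - 2*e^2*q + e*q^2)"
    by (simp add: E field_simps; algebra)
  then show "e^2*(1-e^2)*(K - q + q*R - 2*E - E*R - 2*E*q*K + E*q^2 - E*q^2*R + 2*E^2*q) = 0" using Q K R by simp
  have "e^3*(1-e^2)*(- R - q*K + q^2 - q^2*R + E*K + 3*E*q + 2*E*q*R + 2*E*q^2*K - E*q^3 + E*q^3*R - 3*E^2*q^2) =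
     e^3*(- q + (1/2)*e + e*q^2)*((1-e^2)*K - (e*(2-e*q)*(1+e^2-e*q) + (1-e^2)*e/2))
     + e^3*(- 1 - q^2 + e*q + (1/2)*e*q^3)*((1-e^2)*R - e^2*(2-e*q)) + (- (1/2)*e^3*q - (1/4)*e^4 - (1/2)*e^5*q + (1/4)*e^6 + (1/2)*e^6*q^2)*(3*e - 2*q - 2*e^2*q + e*q^2)"
    by (simp add: E field_simps; algebra)
  then show "e^3*(1-e^2)*(- R - q*K + q^2 - q^2*R + E*K + 3*E*q + 2*E*q*R + 2*E*q^2*K - E*q^3 + E*q^3*R - 3*E^2*q^2) = 0" using Q K R by simp
  have "e^2*(1-e^2)*(- K + q - 2*q*R + 2*E + E*R + 3*E*q*K + 2*E*q^2*R - 2*E^2*q - E^2*q^3) =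
     e^2*(- 1 + (3/2)*e*q)*((1-e^2)*K - (e*(2-e*q)*(1+e^2-e*q) + (1-e^2)*e/2))
     + e^2*(- 2*q + (1/2)*e + e*q^2)*((1-e^2)*R - e^2*(2-e*q)) + (- (1/2)*e^2 - (1/4)*e^3*q - (1/2)*e^4 + (3/4)*e^5*q)*(3*e - 2*q - 2*e^2*q + e*q^2)"
    by (simp add: E field_simps; algebra)
  then show "e^2*(1-e^2)*(- K + q - 2*q*R + 2*E + E*R + 3*E*q*K + 2*E*q^2*R - 2*E^2*q - E^2*q^3) = 0" using Q K R by simp
qed

lemma core:
  fixes z s E q K R :: complex
  assumes c5: "- R - q*K + q^2 - q^2*R + E*K + 3*E*q + 2*E*q*R + 2*E*q^2*K - E*q^3 + E*q^3*R - 3*E^2*q^2 = 0"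
    and c6: "K - q + q*R - 2*E - E*R - 2*E*q*K + E*q^2 - E*q^2*R + 2*E^2*q = 0"
    and c8: "- K + q - 2*q*R + 2*E + E*R + 3*E*q*K + 2*E*q^2*R - 2*E^2*q - E^2*q^3 = 0"
    and c9: "R - E*K - E*q - E*q*R + E^2*q^2 = 0"
    and hs: "s*(1 - q*z) = z^2*(z-q)"
  shows "(1-q*z)^2 * (z^3*(K + R* s - z + E*z^2)*(s - E*q*z + E*z^2)
     - (K* s^2*z^2 + R* s*z^2 - s^2*z + E* s^2)*(1 - E*q + E*z)) = 0"
proof -
  define P0 where "P0 = -(z^4*E*q*K) + z^5*E*K + z^5*E*q - z^6*E - z^6*E^2*q + z^7*E^2"
  define P1 where "P1 = -(z^2*R) + z^2*E*q*R + z^3*K - z^3*E*R - z^4 - z^4*E*q*R + z^5*E + z^5*E*R"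
  define P2 where "P2 = -E + E^2*q + z - z*E*q - z*E^2 - z^2*K + z^2*E + z^2*E*q*K + z^3*R - z^3*E*K"
  have "(1-q*z)^2 * (z^3*(K + R* s - z + E*z^2)*(s - E*q*z + E*z^2)
     - (K* s^2*z^2 + R* s*z^2 - s^2*z + E* s^2)*(1 - E*q + E*z))
     = P2*(s*(1-q*z))^2 + P1*(1-q*z)*(s*(1-q*z)) + P0*(1-q*z)^2"
    unfolding P0_def P1_def P2_def by algebra
  also have "\<dots> = P2*(z^2*(z-q))^2 + P1*(1-q*z)*(z^2*(z-q)) + P0*(1-q*z)^2" by (simp add: hs)
  also have "\<dots> = z^4*q*(R - E*K - E*q - E*q*R + E^2*q^2)
     + z^5*(- R - q*K + q^2 - q^2*R + E*K + 3*E*q + 2*E*q*R + 2*E*q^2*K - E*q^3 + E*q^3*R - 3*E^2*q^2)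
     + z^6*(K - q + q*R - 2*E - E*R - 2*E*q*K + E*q^2 - E*q^2*R + 2*E^2*q)
     + z^7*q*(K - q + q*R - 2*E - E*R - 2*E*q*K + E*q^2 - E*q^2*R + 2*E^2*q)
     + z^8*(- K + q - 2*q*R + 2*E + E*R + 3*E*q*K + 2*E*q^2*R - 2*E^2*q - E^2*q^3)
     + z^9*(R - E*K - E*q - E*q*R + E^2*q^2)"
    unfolding P0_def P1_def P2_def by algebra
  also have "\<dots> = 0" using c5 c6 c8 c9 by simp
  finally show ?thesis .
qed

lemma orth_ident:
  fixes z1 z2 z3 K R E :: complex
  assumes nz: "z1 \<noteq> 0" "z2 \<noteq> 0" "z3 \<noteq> 0"
  defines "q \<equiv> z1+z2+z3" and "s \<equiv> z1*z2*z3"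
  shows "(K + R* s - (z1 - E*z1^2)) * (1/z2 - E/z2^2 - (1/z3 - E/z3^2))
       + (K + R/s - 1/z1 + E/z1^2) * ((z2 - E*z2^2) - (z3 - E*z3^2))
     = (z2 - z3) * ((K* s^2*z1^2 + R* s*z1^2 - s^2*z1 + E* s^2)*(1 - E*q + E*z1)
          - z1^3*(K + R* s - z1 + E*z1^2)*(s - E*q*z1 + E*z1^2)) / (z1^4*(z2*z3)^2)"
  unfolding q_def s_def using nz
  apply (simp add: field_simps)
  by algebra

lemma hs_gen:
  fixes z1 z2 z3 q :: complex
  assumes "z1+z2+z3 = q" "z1*z2+z1*z3+z2*z3 = q*(z1*z2*z3)"
  shows "(z1*z2*z3)*(1 - q*z1) = z1^2*(z1-q)"
proof -
  have h: "q - z1 = z2 + z3" using assms(1) by (simp add: algebra_simps)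
  have "q * (z1*z2*z3) = z1*(q - z1) + z2*z3" unfolding h using assms(2) by (simp add: algebra_simps)
  moreover have "(z1*z2*z3)*(1 - q*z1) - z1^2*(z1-q) = - z1 * (q * (z1*z2*z3) - (z1*(q - z1) + z2*z3))"
    by algebra
  ultimately show ?thesis by simp
qed

lemma cnj_unit: "cmod z = 1 \<Longrightarrow> cnj z = 1 / z"
proof -
  assume h: "cmod z = 1"
  then have "z \<noteq> 0" by auto
  have "z * cnj z = complex_of_real ((cmod z)^2)" by (simp only: complex_norm_square)
  then have "z * cnj z = 1" using h by simp
  then show ?thesis using \<open>z \<noteq> 0\<close> by (simp add: field_simps)
qed

lemma orth_core:
  fixes z1 z2 z3 :: complex and e q K R :: real
  assumes u1: "cmod z1 = 1" and u2: "cmod z2 = 1" and u3: "cmod z3 = 1"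
    and s1: "z1+z2+z3 = of_real q" and s2: "z1*z2+z1*z3+z2*z3 = of_real q*(z1*z2*z3)"
    and q1: "q^2 \<noteq> 1" and e0: "e \<noteq> 0" and e1: "1 - e^2 \<noteq> 0"
    and Q: "3*e - 2*q - 2*e^2*q + e*q^2 = 0"
    and K: "(1-e^2)*K = e*(2-e*q)*(1+e^2-e*q) + (1-e^2)*e/2" and R: "(1-e^2)*R = e^2*(2-e*q)"
  shows "Re (of_real K + of_real R*(z1*z2*z3) - (z1 - of_real (e/2)*z1^2)) * Re ((z2 - of_real (e/2)*z2^2) - (z3 - of_real (e/2)*z3^2))
       + Im (of_real K + of_real R*(z1*z2*z3) - (z1 - of_real (e/2)*z1^2)) * Im ((z2 - of_real (e/2)*z2^2) - (z3 - of_real (e/2)*z3^2)) = 0"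
proof -
  define E where "E = e/2"
  note cf = coeffs[OF Q K R E_def]
  have c9: "R - E*K - E*q - E*q*R + E^2*q^2 = 0" using cf(1) e0 e1 by simp
  have c6: "K - q + q*R - 2*E - E*R - 2*E*q*K + E*q^2 - E*q^2*R + 2*E^2*q = 0" using cf(2) e0 e1 by simp
  have c5: "- R - q*K + q^2 - q^2*R + E*K + 3*E*q + 2*E*q*R + 2*E*q^2*K - E*q^3 + E*q^3*R - 3*E^2*q^2 = 0" using cf(3) e0 e1 by simp
  have c8: "- K + q - 2*q*R + 2*E + E*R + 3*E*q*K + 2*E*q^2*R - 2*E^2*q - E^2*q^3 = 0" using cf(4) e0 e1 by simp
  let ?E = "complex_of_real E" and ?q = "complex_of_real q" and ?K = "complex_of_real K" and ?R = "complex_of_real R"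
  have C9: "?R - ?E*?K - ?E*?q - ?E*?q*?R + ?E^2*?q^2 = 0"
    using arg_cong[OF c9, of complex_of_real] by simp
  have C6: "?K - ?q + ?q*?R - 2*?E - ?E*?R - 2*?E*?q*?K + ?E*?q^2 - ?E*?q^2*?R + 2*?E^2*?q = 0"
    using arg_cong[OF c6, of complex_of_real] by simp
  have C5: "- ?R - ?q*?K + ?q^2 - ?q^2*?R + ?E*?K + 3*?E*?q + 2*?E*?q*?R + 2*?E*?q^2*?K - ?E*?q^3 + ?E*?q^3*?R - 3*?E^2*?q^2 = 0"
    using arg_cong[OF c5, of complex_of_real] by simp
  have C8: "- ?K + ?q - 2*?q*?R + 2*?E + ?E*?R + 3*?E*?q*?K + 2*?E*?q^2*?R - 2*?E^2*?q - ?E^2*?q^3 = 0"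
    using arg_cong[OF c8, of complex_of_real] by simp
  define s where "s = z1*z2*z3"
  have nz: "z1 \<noteq> 0" "z2 \<noteq> 0" "z3 \<noteq> 0" using u1 u2 u3 by auto
  have hs: "s*(1 - ?q*z1) = z1^2*(z1-?q)"
    using hs_gen[OF s1 s2] unfolding s_def .
  have qz: "1 - ?q*z1 \<noteq> 0"
  proof
    assume "1 - ?q*z1 = 0"
    then have "?q*z1 = 1" by simp
    then have "cmod (?q*z1) = 1" by simp
    then have "\<bar>q\<bar> = 1" using u1 by (simp add: norm_mult)
    then have "q^2 = 1" by (metis abs_power2 one_power2 power2_abs)
    with q1 show False by simp
  qed
  have "(1-?q*z1)^2 * (z1^3*(?K + ?R* s - z1 + ?E*z1^2)*(s - ?E*?q*z1 + ?E*z1^2)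
     - (?K* s^2*z1^2 + ?R* s*z1^2 - s^2*z1 + ?E* s^2)*(1 - ?E*?q + ?E*z1)) = 0"
    by (rule core[OF C5 C6 C8 C9 hs])
  then have LR: "(?K* s^2*z1^2 + ?R* s*z1^2 - s^2*z1 + ?E* s^2)*(1 - ?E*?q + ?E*z1)
     - z1^3*(?K + ?R* s - z1 + ?E*z1^2)*(s - ?E*?q*z1 + ?E*z1^2) = 0"
    using qz by simp
  define X where "X = ?K + ?R* s - (z1 - ?E*z1^2)"
  define Y where "Y = (z2 - ?E*z2^2) - (z3 - ?E*z3^2)"
  have cX: "cnj X = ?K + ?R/s - 1/z1 + ?E/z1^2"
    unfolding X_def s_def using cnj_unit[OF u1] cnj_unit[OF u2] cnj_unit[OF u3]
    by (simp add: field_simps)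
  have cY: "cnj Y = 1/z2 - ?E/z2^2 - (1/z3 - ?E/z3^2)"
    unfolding Y_def using cnj_unit[OF u2] cnj_unit[OF u3]
    by (simp add: field_simps)
  have "X * cnj Y + cnj X * Y = (z2 - z3) * ((?K* s^2*z1^2 + ?R* s*z1^2 - s^2*z1 + ?E* s^2)*(1 - ?E*(z1+z2+z3) + ?E*z1)
          - z1^3*(?K + ?R* s - z1 + ?E*z1^2)*(s - ?E*(z1+z2+z3)*z1 + ?E*z1^2)) / (z1^4*(z2*z3)^2)"
    unfolding cX cY unfolding X_def Y_def s_def using orth_ident[OF nz, of ?K ?R ?E] by simp
  also have "\<dots> = 0" using LR unfolding s1 by simp
  finally have "X * cnj Y + cnj (X * cnj Y) = 0" by simp
  then have "Re (X * cnj Y) = 0" by (metis complex_add_cnj mult_eq_0_iff of_real_eq_0_iff zero_neq_numeral)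
  then have "Re X * Re Y + Im X * Im Y = 0" by simp
  then show ?thesis unfolding X_def Y_def s_def E_def .
qed



definition FF :: "complex \<Rightarrow> complex \<Rightarrow> complex \<Rightarrow> complex \<Rightarrow> complex \<Rightarrow> complex" where
  "FF al ga be x y = al*(x+y)^2 - ga*(x+y)*(x*y+1) - 2*be*x*y"

lemma FF_sym: "FF al ga be x y = FF al ga be y x"
  unfolding FF_def by (simp add: algebra_simps)

lemma pairF:
  assumes "FF al ga be x y = 0" "FF al ga be x w = 0" "y \<noteq> w"
  shows "(al - ga*x)*(y*w) = x*(al*x - ga)"
    and "(al - ga*x)*(y+w) + 2*al*x - ga*(x^2+1) - 2*be*x = 0"
proof -
  have i1: "w * FF al ga be x y - y * FF al ga be x w = (y - w)*((al - ga*x)*(y*w) - x*(al*x - ga))"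
    unfolding FF_def by algebra
  have i2: "FF al ga be x y - FF al ga be x w = (y - w)*((al - ga*x)*(y+w) + 2*al*x - ga*(x^2+1) - 2*be*x)"
    unfolding FF_def by algebra
  have "y - w \<noteq> 0" using assms(3) by simp
  from i1 assms(1,2) this show "(al - ga*x)*(y*w) = x*(al*x - ga)" by simp
  from i2 assms(1,2) \<open>y - w \<noteq> 0\<close> show "(al - ga*x)*(y+w) + 2*al*x - ga*(x^2+1) - 2*be*x = 0" by simp
qed

lemma cubic_of:
  fixes al ga x y w :: complex
  assumes "(al - ga*x)*(y*w) = x*(al*x - ga)"
  shows "al*x^3 - ga*x^2 + ga*(x*y*w)*x - al*(x*y*w) = 0"
proof -
  have "al*x^3 - ga*x^2 + ga*(x*y*w)*x - al*(x*y*w) = - x * ((al - ga*x)*(y*w) - x*(al*x - ga))"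
    by algebra
  then show ?thesis using assms by simp
qed

lemma triple_rel:
  fixes z1 z2 z3 al ga be :: complex
  assumes F12: "FF al ga be z1 z2 = 0" and F13: "FF al ga be z1 z3 = 0" and F23: "FF al ga be z2 z3 = 0"
    and d12: "z1 \<noteq> z2" and d13: "z1 \<noteq> z3" and d23: "z2 \<noteq> z3"
    and nz: "z1 \<noteq> 0" and al: "al \<noteq> 0"
  shows "al*(z1+z2+z3) = ga" "al*(z1*z2+z1*z3+z2*z3) = ga*(z1*z2*z3)" "al^2 - ga^2 - 2*al*be = 0"
proof -
  define s where "s = z1*z2*z3"
  have p1: "al*z1^3 - ga*z1^2 + ga* s*z1 - al* s = 0"
    using cubic_of[OF pairF(1)[OF F12 F13 d23]] unfolding s_def .
  have p2: "al*z2^3 - ga*z2^2 + ga* s*z2 - al* s = 0"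
  proof -
    have "FF al ga be z2 z1 = 0" using F12 FF_sym by metis
    from cubic_of[OF pairF(1)[OF this F23 d13]] show ?thesis unfolding s_def by (simp add: ac_simps)
  qed
  have p3: "al*z3^3 - ga*z3^2 + ga* s*z3 - al* s = 0"
  proof -
    have a: "FF al ga be z3 z1 = 0" using F13 FF_sym by metis
    have b: "FF al ga be z3 z2 = 0" using F23 FF_sym by metis
    from cubic_of[OF pairF(1)[OF a b d12]] show ?thesis unfolding s_def by (simp add: ac_simps)
  qed
  have dd12: "al*(z1^2+z1*z2+z2^2) - ga*(z1+z2) + ga* s = 0"
  proof -
    have "al*z1^3 - ga*z1^2 + ga* s*z1 - al* s - (al*z2^3 - ga*z2^2 + ga* s*z2 - al* s)
        = (z1 - z2)*(al*(z1^2+z1*z2+z2^2) - ga*(z1+z2) + ga* s)" by algebra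
    then show ?thesis using p1 p2 d12 by simp
  qed
  have dd13: "al*(z1^2+z1*z3+z3^2) - ga*(z1+z3) + ga* s = 0"
  proof -
    have "al*z1^3 - ga*z1^2 + ga* s*z1 - al* s - (al*z3^3 - ga*z3^2 + ga* s*z3 - al* s)
        = (z1 - z3)*(al*(z1^2+z1*z3+z3^2) - ga*(z1+z3) + ga* s)" by algebra
    then show ?thesis using p1 p3 d13 by simp
  qed
  have S1: "al*(z1+z2+z3) = ga"
  proof -
    have "al*(z1^2+z1*z2+z2^2) - ga*(z1+z2) + ga* s - (al*(z1^2+z1*z3+z3^2) - ga*(z1+z3) + ga* s)
      = (z2 - z3)*(al*(z1+z2+z3) - ga)" by algebra
    then show ?thesis using dd12 dd13 d23 by simp
  qed
  show "al*(z1+z2+z3) = ga" by (rule S1)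
  show "al*(z1*z2+z1*z3+z2*z3) = ga*(z1*z2*z3)"
  proof -
    have "al*(z1^2+z1*z2+z2^2) - ga*(z1+z2) + ga* s = -(al*(z1*z2+z1*z3+z2*z3) - ga* s) + (z1+z2)*(al*(z1+z2+z3) - ga)"
      by algebra
    then show ?thesis using dd12 S1 unfolding s_def by simp
  qed
  show "al^2 - ga^2 - 2*al*be = 0"
  proof -
    have B: "(al - ga*z1)*(z2+z3) + 2*al*z1 - ga*(z1^2+1) - 2*be*z1 = 0" by (rule pairF(2)[OF F12 F13 d23])
    have "al*((al - ga*z1)*(z2+z3) + 2*al*z1 - ga*(z1^2+1) - 2*be*z1)
        = (al - ga*z1)*(al*(z1+z2+z3) - ga) + z1*(al^2 - ga^2 - 2*al*be)" by algebra
    then have "z1*(al^2 - ga^2 - 2*al*be) = 0" using B S1 by simp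
    then show ?thesis using nz by simp
  qed
qed



lemma focal_rep:
  fixes a b :: real and P :: pt
  assumes ab: "a > b" "b > 0" and P: "on_ellipse a b P"
  obtains C S where "C^2+S^2 = 1" "1 - (sqrt (a^2-b^2)/a)*C > 0"
    "fst P * (1 - (sqrt (a^2-b^2)/a)*C) = a*C - sqrt (a^2-b^2)"
    "snd P * (1 - (sqrt (a^2-b^2)/a)*C) = (b^2/a)*S"
    "dist P (- sqrt (a^2-b^2), 0) * (1 - (sqrt (a^2-b^2)/a)*C) = b^2/a"
    "fst P + sqrt (a^2-b^2) = dist P (- sqrt (a^2-b^2), 0) * C"
    "snd P = dist P (- sqrt (a^2-b^2), 0) * S"
proof -
  define c where "c = sqrt (a^2-b^2)"
  obtain x y where Pxy: "P = (x,y)" by (cases P)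
  have a0: "a > 0" using ab by simp
  have ba: "b^2 \<le> a^2" using ab by (intro power_mono) auto
  have cc: "c^2 = a^2 - b^2" unfolding c_def using ba by (intro real_sqrt_pow2) linarith
  have c0: "c \<ge> 0" unfolding c_def using ba by simp
  have ca: "c < a"
  proof -
    have "a^2 - b^2 < a^2" using ab by simp
    then have "sqrt (a^2-b^2) < sqrt (a^2)" by (simp only: real_sqrt_less_iff)
    then show ?thesis unfolding c_def using a0 by simp
  qed
  have ell: "x^2*b^2 + y^2*a^2 = a^2*b^2" using P ab unfolding on_ellipse_def Pxy
    by (simp add: field_simps)
  have xa: "x^2 \<le> a^2"
  proof -
    have "x^2*b^2 \<le> a^2*b^2" using ell by (smt (verit) mult_nonneg_nonneg zero_le_power2)
    then show ?thesis using ab by simp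
  qed
  then have "\<bar>x\<bar> \<le> a" using a0 by (metis abs_le_square_iff abs_of_pos)
  define d where "d = a + c*x/a"
  have dpos: "d > 0"
  proof -
    have "c*\<bar>x\<bar> \<le> c*a" using \<open>\<bar>x\<bar> \<le> a\<close> c0 by (simp add: mult_left_mono)
    moreover have "c*a < a*a" by (rule mult_strict_right_mono[OF ca a0])
    moreover have "c*(-x) \<le> c*\<bar>x\<bar>" using c0 by (intro mult_left_mono) auto
    ultimately have "-(c*x) < a*a" by simp
    then have "a*a + c*x > 0" by simp
    then show ?thesis unfolding d_def using a0 by (simp add: field_simps)
  qed
  have dd: "(x + c)^2 + y^2 = d^2"
  proof -
    have "a^2*((x + c)^2 + y^2) = a^2 * d^2"
      unfolding d_def using a0 ell cc by (simp add: field_simps power2_eq_square; algebra)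
    then show ?thesis using a0 by simp
  qed
  have dist: "dist P (-c,0) = d"
  proof -
    have "dist P (-c,0) = sqrt ((x+c)^2 + y^2)" unfolding Pxy by (simp add: dist_Pair_Pair dist_real_def)
    also have "\<dots> = d" using dd dpos by simp
    finally show ?thesis .
  qed
  define C where "C = (x+c)/d"
  define S where "S = y/d"
  have u: "d * (1 - (c/a)*C) = b^2/a"
  proof -
    have "d*(1 - (c/a)*C) = d - (c/a)*(x+c)" unfolding C_def using dpos a0 by (simp add: field_simps)
    also have "\<dots> = (a^2 - c^2)/a" unfolding d_def using a0 by (simp add: field_simps power2_eq_square)
    also have "\<dots> = b^2/a" using cc by simp
    finally show ?thesis .
  qed
  show ?thesis
  proof (rule that[of C S, folded c_def])
    show "C^2+S^2 = 1" unfolding C_def S_def using dd dpos by (simp add: field_simps)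
    show "1 - c/a*C > 0"
    proof -
      have "b^2/a > 0" using ab by simp
      then have "d * (1 - (c/a)*C) > 0" using u by simp
      then show ?thesis using dpos by (simp add: zero_less_mult_iff)
    qed
    show "fst P * (1 - c/a*C) = a*C - c"
    proof -
      have "x * (d*(1 - c/a*C)) = x*(b^2/a)" using u by simp
      also have "\<dots> = a*(x+c) - c*d"
      proof -
        have bc: "b*b + c*c = a*a" using cc by (simp add: power2_eq_square)
        have "b*b*x + c*c*x = (b*b + c*c)*x" by (simp add: algebra_simps)
        then have "b*b*x + c*c*x = a*a*x" using bc by simp
        then show ?thesis unfolding d_def using a0 by (simp add: field_simps power2_eq_square)
      qed
      also have "\<dots> = d*(a*C - c)" unfolding C_def using dpos a0 by (simp add: field_simps)
      finally have "d * (x*(1 - c/a*C)) = d*(a*C - c)" by (simp add: ac_simps)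
      then show ?thesis unfolding Pxy using dpos by simp
    qed
    show "snd P * (1 - c/a*C) = (b^2/a)*S"
    proof -
      have "d*(y*(1 - c/a*C)) = y*(d*(1 - c/a*C))" by (simp add: ac_simps)
      also have "\<dots> = y*(b^2/a)" using u by simp
      also have "\<dots> = d*((b^2/a)*S)" unfolding S_def using dpos by simp
      finally have "d*(y*(1 - c/a*C)) = d*((b^2/a)*S)" .
      then have "y*(1 - c/a*C) = (b^2/a)*S" using dpos by (subst (asm) mult_left_cancel) auto
      then show ?thesis unfolding Pxy by simp
    qed
    show "dist P (-c,0) * (1 - c/a*C) = b^2/a" using u dist by simp
    have "dist P (-c,0) * C = x + c" unfolding C_def dist using dpos by simp
    then show "fst P + c = dist P (-c,0) * C" using Pxy by simp
    have "dist P (-c,0) * S = y" unfolding S_def dist using dpos by simp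
    then show "snd P = dist P (-c,0) * S" using Pxy by simp
  qed
qed



lemma chord_CS:
  fixes a b c x1 y1 x2 y2 C1 S1 C2 S2 :: real
  assumes a0: "a > 0" and b0: "b > 0" and cc: "c^2 = a^2 - b^2"
    and hx1: "x1*(1-(c/a)*C1) = a*C1 - c" and hy1: "y1*(1-(c/a)*C1) = (b^2/a)*S1"
    and hx2: "x2*(1-(c/a)*C2) = a*C2 - c" and hy2: "y2*(1-(c/a)*C2) = (b^2/a)*S2"
  shows "(x1*x2/a^2 + y1*y2/b^2 - 1)*((1-(c/a)*C1)*(1-(c/a)*C2)) = -(b^2/a^2)*(1-(C1*C2+S1*S2))"
    and "((x2-x1)^2+(y2-y1)^2)*((1-(c/a)*C1)*(1-(c/a)*C2))^2
         = (b^2/a)^2*((C2-C1)^2 + (S2-S1-(c/a)*(S2*C1-S1*C2))^2)"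
proof -
  define u1 where "u1 = 1-(c/a)*C1"
  define u2 where "u2 = 1-(c/a)*C2"
  have X: "x1*x2*(u1*u2) = (a*C1-c)*(a*C2-c)"
  proof -
    have "x1*x2*(u1*u2) = (x1*u1)*(x2*u2)" by (simp add: ac_simps)
    also have "\<dots> = (a*C1-c)*(a*C2-c)" unfolding u1_def u2_def by (simp only: hx1 hx2)
    finally show ?thesis .
  qed
  have Y: "y1*y2*(u1*u2) = (b^2/a)^2*(S1*S2)"
  proof -
    have "y1*y2*(u1*u2) = (y1*u1)*(y2*u2)" by (simp add: ac_simps)
    also have "\<dots> = ((b^2/a)*S1)*((b^2/a)*S2)" unfolding u1_def u2_def by (simp only: hy1 hy2)
    finally show ?thesis by (simp add: power2_eq_square)
  qed
  have "(x1*x2/a^2 + y1*y2/b^2 - 1)*(u1*u2) = (x1*x2*(u1*u2))/a^2 + (y1*y2*(u1*u2))/b^2 - u1*u2"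
    by (simp add: field_simps)
  also have "\<dots> = (a*C1-c)*(a*C2-c)/a^2 + (b^2/a)^2*(S1*S2)/b^2 - u1*u2" using X Y by simp
  also have "\<dots> = -(b^2/a^2)*(1-(C1*C2+S1*S2))"
    unfolding u1_def u2_def using a0 b0 cc by (simp add: field_simps power2_eq_square; algebra)
  finally show "(x1*x2/a^2 + y1*y2/b^2 - 1)*((1-(c/a)*C1)*(1-(c/a)*C2)) = -(b^2/a^2)*(1-(C1*C2+S1*S2))"
    unfolding u1_def u2_def .
  have DX: "(x2-x1)*(u1*u2) = (b^2/a)*(C2-C1)"
  proof -
    have "(x2-x1)*(u1*u2) = (x2*u2)*u1 - (x1*u1)*u2" by (simp add: algebra_simps)
    also have "\<dots> = (a*C2-c)*u1 - (a*C1-c)*u2" using hx1 hx2 unfolding u1_def u2_def by simp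
    also have "\<dots> = (b^2/a)*(C2-C1)" unfolding u1_def u2_def using a0 cc
      by (simp add: field_simps power2_eq_square; algebra)
    finally show ?thesis .
  qed
  have DY: "(y2-y1)*(u1*u2) = (b^2/a)*(S2-S1-(c/a)*(S2*C1-S1*C2))"
  proof -
    have "(y2-y1)*(u1*u2) = (y2*u2)*u1 - (y1*u1)*u2" by (simp add: algebra_simps)
    also have "\<dots> = (b^2/a)*S2*u1 - (b^2/a)*S1*u2" using hy1 hy2 unfolding u1_def u2_def by simp
    also have "\<dots> = (b^2/a)*(S2-S1-(c/a)*(S2*C1-S1*C2))" unfolding u1_def u2_def
      by algebra
    finally show ?thesis .
  qed
  have "((x2-x1)^2+(y2-y1)^2)*(u1*u2)^2 = ((x2-x1)*(u1*u2))^2 + ((y2-y1)*(u1*u2))^2"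
    by (simp add: algebra_simps power2_eq_square)
  also have "\<dots> = (b^2/a)^2*((C2-C1)^2 + (S2-S1-(c/a)*(S2*C1-S1*C2))^2)"
    unfolding DX DY by algebra
  finally show "((x2-x1)^2+(y2-y1)^2)*((1-(c/a)*C1)*(1-(c/a)*C2))^2
         = (b^2/a)^2*((C2-C1)^2 + (S2-S1-(c/a)*(S2*C1-S1*C2))^2)" unfolding u1_def u2_def .
qed

lemma G_ident:
  fixes e C1 S1 C2 S2 :: real
  assumes "C1^2+S1^2 = 1" "C2^2+S2^2 = 1"
  shows "(C2-C1)^2 + (S2-S1-e*(S2*C1-S1*C2))^2
       = 2*(1-(C1*C2+S1*S2))*(1 + (e^2/2)*(1+(C1*C2+S1*S2)) - e*(C1+C2))"
  using assms by (simp add: field_simps; algebra)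

lemma FF_of_T:
  fixes al ga be C1 S1 C2 S2 :: real
  assumes u1: "C1^2+S1^2 = 1" and u2: "C2^2+S2^2 = 1"
    and T: "al*(1+(C1*C2+S1*S2)) - ga*(C1+C2) - be = 0"
  shows "FF (of_real al) (of_real ga) (of_real be) (Complex C1 S1) (Complex C2 S2) = 0"
proof -
  define z1 where "z1 = Complex C1 S1"
  define z2 where "z2 = Complex C2 S2"
  have h1: "z1^2 + z2^2 = 2*z1*z2* of_real (C1*C2+S1*S2)"
  proof -
    have "Re (z1^2 + z2^2) = Re (2*z1*z2* of_real (C1*C2+S1*S2))"
      unfolding z1_def z2_def using u1 u2 by (simp add: power2_eq_square; algebra)
    moreover have "Im (z1^2 + z2^2) = Im (2*z1*z2* of_real (C1*C2+S1*S2))"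
      unfolding z1_def z2_def using u1 u2 by (simp add: power2_eq_square; algebra)
    ultimately show ?thesis by (simp add: complex_eq_iff)
  qed
  have h2: "(z1+z2)*(z1*z2+1) = 2*z1*z2* of_real (C1+C2)"
  proof -
    have "Re ((z1+z2)*(z1*z2+1)) = Re (2*z1*z2* of_real (C1+C2))"
      unfolding z1_def z2_def using u1 u2 by (simp add: power2_eq_square; algebra)
    moreover have "Im ((z1+z2)*(z1*z2+1)) = Im (2*z1*z2* of_real (C1+C2))"
      unfolding z1_def z2_def using u1 u2 by (simp add: power2_eq_square; algebra)
    ultimately show ?thesis by (simp add: complex_eq_iff)
  qed
  have "FF (of_real al) (of_real ga) (of_real be) z1 z2
      = of_real al*(z1^2+z2^2) + 2* of_real al*z1*z2 - of_real ga*((z1+z2)*(z1*z2+1)) - 2* of_real be*z1*z2"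
    unfolding FF_def by (simp add: algebra_simps power2_eq_square)
  also have "\<dots> = 2*z1*z2* of_real (al*(1+(C1*C2+S1*S2)) - ga*(C1+C2) - be)"
    unfolding h1 h2 by (simp add: algebra_simps)
  also have "\<dots> = 0" using T by simp
  finally show ?thesis unfolding z1_def z2_def .
qed

lemma uniq_core:
  fixes d1 d2 u1 u2 v1 v2 p1 p2 r1 r2 :: real
  assumes "d1*u1 + d2*u2 = 0" "d1* v1 + d2* v2 = 0" "p1*u1 + p2*u2 = 0" "r1* v1 + r2* v2 = 0"
    and "p1 - r1 = u1 + v1" "p2 - r2 = u2 + v2"
    and "(u1,u2) \<noteq> (0,0)" "(v1,v2) \<noteq> (0,0)" "(u1+v1,u2+v2) \<noteq> (0,0)"
  shows "d1 = 0 \<and> d2 = 0"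
proof (rule ccontr)
  assume nd: "\<not> (d1 = 0 \<and> d2 = 0)"
  then have n: "d1^2 + d2^2 > 0" by (auto simp: sum_power2_gt_zero_iff)
  define al where "al = u2*d1 - u1*d2"
  define be where "be = v2*d1 - v1*d2"
  have i1: "(d1^2+d2^2)*u1 = d1*(d1*u1 + d2*u2) - d2*al" "(d1^2+d2^2)*u2 = d2*(d1*u1 + d2*u2) + d1*al"
    unfolding al_def by algebra+
  have U1: "(d1^2+d2^2)*u1 = -d2*al" "(d1^2+d2^2)*u2 = d1*al" using i1 assms(1) by simp_all
  have i2: "(d1^2+d2^2)* v1 = d1*(d1* v1 + d2* v2) - d2*be" "(d1^2+d2^2)* v2 = d2*(d1* v1 + d2* v2) + d1*be"
    unfolding be_def by algebra+
  have V1: "(d1^2+d2^2)* v1 = -d2*be" "(d1^2+d2^2)* v2 = d1*be" using i2 assms(2) by simp_all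
  have al0: "al \<noteq> 0"
  proof
    assume "al = 0"
    then have "(d1^2+d2^2)*u1 = 0" "(d1^2+d2^2)*u2 = 0" using U1 by simp_all
    then have "u1 = 0" "u2 = 0" using nd by auto
    then show False using assms(7) by simp
  qed
  have be0: "be \<noteq> 0"
  proof
    assume "be = 0"
    then have "(d1^2+d2^2)* v1 = 0" "(d1^2+d2^2)* v2 = 0" using V1 by simp_all
    then have "v1 = 0" "v2 = 0" using nd by auto
    then show False using assms(8) by simp
  qed
  have "(d1^2+d2^2)*(p1*u1 + p2*u2) = p1*((d1^2+d2^2)*u1) + p2*((d1^2+d2^2)*u2)" by algebra
  also have "\<dots> = al*(p2*d1 - p1*d2)" unfolding U1 by algebra
  finally have "(d1^2+d2^2)*(p1*u1 + p2*u2) = al*(p2*d1 - p1*d2)" .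
  then have P: "p2*d1 - p1*d2 = 0" using assms(3) al0 by simp
  have "(d1^2+d2^2)*(r1* v1 + r2* v2) = r1*((d1^2+d2^2)* v1) + r2*((d1^2+d2^2)* v2)" by algebra
  also have "\<dots> = be*(r2*d1 - r1*d2)" unfolding V1 by algebra
  finally have "(d1^2+d2^2)*(r1* v1 + r2* v2) = be*(r2*d1 - r1*d2)" .
  then have Rr: "r2*d1 - r1*d2 = 0" using assms(4) be0 by simp
  have "al + be = (p2-r2)*d1 - (p1-r1)*d2" unfolding al_def be_def using assms(5,6) by (simp add: algebra_simps)
  then have ab: "al + be = 0" using P Rr by (simp add: algebra_simps)
  have "(d1^2+d2^2)*(u1+v1) = -d2*(al+be)" "(d1^2+d2^2)*(u2+v2) = d1*(al+be)"
    using U1 V1 by (simp_all add: algebra_simps)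
  then have "(d1^2+d2^2)*(u1+v1) = 0" "(d1^2+d2^2)*(u2+v2) = 0" using ab by simp_all
  then have "u1+v1 = 0" "u2+v2 = 0" using nd by auto
  then show False using assms(9) by simp
qed



lemma ell_normal_nz:
  assumes "on_ellipse a b P" "a > 0" "b > 0"
  shows "ell_normal a b P \<noteq> 0"
proof
  assume "ell_normal a b P = 0"
  then have "fst P = 0" "snd P = 0" using assms(2,3) unfolding ell_normal_def by (simp_all add: prod_eq_iff)
  then show False using assms(1) unfolding on_ellipse_def by simp
qed

lemma normal_dot:
  assumes "on_ellipse a b P" "a \<noteq> 0" "b \<noteq> 0"
  shows "ell_normal a b P \<bullet> (Q - P) = fst P* fst Q/a^2 + snd P* snd Q/b^2 - 1"
proof -
  have "ell_normal a b P \<bullet> (Q - P) = fst P* fst Q/a^2 + snd P* snd Q/b^2 - ((fst P)^2/a^2 + (snd P)^2/b^2)"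
    unfolding ell_normal_def using assms(2,3) by (simp add: inner_prod_def field_simps power2_eq_square)
  then show ?thesis using assms unfolding on_ellipse_def by simp
qed

lemma nb_ratio:
  assumes nb: "normal_bisects a b P Q R" and n: "ell_normal a b P \<noteq> 0" and "P \<noteq> Q" "P \<noteq> R"
  shows "(ell_normal a b P \<bullet> (Q - P)) / norm (Q - P) = (ell_normal a b P \<bullet> (R - P)) / norm (R - P)"
proof -
  define n where "n = ell_normal a b P"
  have nq: "norm (Q - P) > 0" "norm (R - P) > 0" "norm n > 0" using assms(3,4) n unfolding n_def by auto
  have b1: "\<bar>(n \<bullet> (Q - P)) / (norm n * norm (Q - P))\<bar> \<le> 1"
    using nq Cauchy_Schwarz_ineq2[of n "Q - P"] by (simp add: abs_div divide_le_eq_1 abs_mult)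
  have b2: "\<bar>(n \<bullet> (R - P)) / (norm n * norm (R - P))\<bar> \<le> 1"
    using nq Cauchy_Schwarz_ineq2[of n "R - P"] by (simp add: abs_div divide_le_eq_1 abs_mult)
  have "arccos ((n \<bullet> (Q - P)) / (norm n * norm (Q - P))) = arccos ((n \<bullet> (R - P)) / (norm n * norm (R - P)))"
    using nb unfolding normal_bisects_def vec_angle_def n_def .
  then have "(n \<bullet> (Q - P)) / (norm n * norm (Q - P)) = (n \<bullet> (R - P)) / (norm n * norm (R - P))"
    using arccos_eq_iff b1 b2 by blast
  then have "norm n * ((n \<bullet> (Q - P)) / (norm n * norm (Q - P))) = norm n * ((n \<bullet> (R - P)) / (norm n * norm (R - P)))"
    by simp
  then show ?thesis using nq unfolding n_def by simp
qed

lemma norm_diff_sq: "(norm ((Q::pt) - P))^2 = (fst Q - fst P)^2 + (snd Q - snd P)^2"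
  by (simp add: norm_prod_def)

lemma q_analysis:
  fixes e b lam q D :: real
  assumes e0: "e > 0" and e1: "e < 1" and b0: "b > 0" and l0: "lam > 0"
    and hq: "q*(b^2+e^2*lam) = 2*e*lam"
    and rel: "(b^2+e^2*lam)^2 - 4*e^2*lam^2 - 4*(b^2+e^2*lam)*(b^2-lam) = 0"
    and D0: "D \<ge> 0" and D2: "D^2 = 1 - e^2 + e^4"
  shows "3*e - 2*q - 2*e^2*q + e*q^2 = 0" "e*q = 1+e^2-D" "q^2 \<noteq> 1"
proof -
  define w where "w = b^2+e^2*lam"
  have w0: "w > 0" unfolding w_def using b0 l0 by (simp add: add_pos_nonneg)
  have "w^2*(3*e - 2*q - 2*e^2*q + e*q^2) = e*(3*w^2 - 4*(1+e^2)*lam*w + 4*e^2*lam^2)"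
  proof -
    have hq': "q*w = 2*e*lam" using hq unfolding w_def .
    have "w^2*(3*e - 2*q - 2*e^2*q + e*q^2) = 3*e*w^2 - 2*(1+e^2)*w*(q*w) + e*(q*w)^2"
      by algebra
    also have "\<dots> = e*(3*w^2 - 4*(1+e^2)*lam*w + 4*e^2*lam^2)" unfolding hq' by algebra
    finally show ?thesis .
  qed
  also have "\<dots> = -e*((b^2+e^2*lam)^2 - 4*e^2*lam^2 - 4*(b^2+e^2*lam)*(b^2-lam))"
    unfolding w_def by algebra
  also have "\<dots> = 0" using rel by simp
  finally show Q: "3*e - 2*q - 2*e^2*q + e*q^2 = 0" using w0 by simp
  have sq: "(e*q - (1+e^2))^2 = D^2"
  proof -
    have "(e*q - (1+e^2))^2 = e*(3*e - 2*q - 2*e^2*q + e*q^2) + (1 - e^2 + e^4)" by algebra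
    then show ?thesis using Q D2 by simp
  qed
  have "e*q - (1+e^2) = D \<or> e*q - (1+e^2) = -D" using sq by (metis power2_eq_iff)
  moreover have "e*q - (1+e^2) \<noteq> D"
  proof
    assume h: "e*q - (1+e^2) = D"
    have Dg: "D > 1 - e^2"
    proof -
      have "D^2 - (1-e^2)^2 = e^2" using D2 by algebra
      then have "(1-e^2)^2 < D^2" using e0 by (smt (verit) zero_less_power)
      moreover have "1 - e^2 \<ge> 0" using e0 e1 by (simp add: abs_square_le_1 less_imp_le)
      ultimately show ?thesis using D0 by (meson power_less_imp_less_base)
    qed
    have qpos: "q > 0"
    proof -
      have "e*q > 0" using h D0 e0 by (smt (verit) zero_le_power2)
      then show ?thesis using e0 by (simp add: zero_less_mult_iff)
    qed
    have "q*b^2 = e*lam*(2 - e*q)" using hq by (simp add: algebra_simps power2_eq_square)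
    moreover have "2 - e*q < 0" using h Dg by simp
    ultimately have "q*b^2 < 0" using e0 l0 by (simp add: mult_pos_neg)
    moreover have "q*b^2 > 0" using qpos b0 by simp
    ultimately show False by simp
  qed
  ultimately show "e*q = 1+e^2-D" by simp
  show "q^2 \<noteq> 1"
  proof
    assume q2: "q^2 = 1"
    then have "4*e = 2*q*(1+e^2)" using Q by (simp add: algebra_simps power2_eq_square) 
    then have "(4*e)^2 = (2*q*(1+e^2))^2" by (simp only:)
    then have h: "16*e^2 = 4*q^2*(1+e^2)^2" by (simp add: power_mult_distrib)
    have "(1-e^2)^2 = (1+e^2)^2 - 4*e^2" by algebra
    also have "\<dots> = (4*q^2*(1+e^2)^2 - 16*e^2)/4" using q2 by simp
    finally have "(1-e^2)^2 = 0" using h by simp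
    then have "e^2 = 1" by simp
    moreover have "e^2 < 1" using e0 e1 by (simp add: power_less_one_iff abs_less_iff)
    ultimately show False by simp
  qed
qed




lemma pair_FF:
  fixes a b c lam x1 y1 x2 y2 C1 S1 C2 S2 :: real
  assumes a0: "a > 0" and b0: "b > 0" and cc: "c^2 = a^2 - b^2"
    and un1: "C1^2+S1^2 = 1" and un2: "C2^2+S2^2 = 1"
    and hx1: "x1*(1-(c/a)*C1) = a*C1 - c" and hy1: "y1*(1-(c/a)*C1) = (b^2/a)*S1"
    and hx2: "x2*(1-(c/a)*C2) = a*C2 - c" and hy2: "y2*(1-(c/a)*C2) = (b^2/a)*S2"
    and dz: "(C1,S1) \<noteq> (C2,S2)"
    and hl: "lam*((x2-x1)^2+(y2-y1)^2) = a^2*b^2*(x1*x2/a^2 + y1*y2/b^2 - 1)^2"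
  shows "FF (of_real ((b^2+(c/a)^2*lam)/2)) (of_real ((c/a)*lam)) (of_real (b^2-lam)) (Complex C1 S1) (Complex C2 S2) = 0"
proof -
  define e where "e = c/a"
  define R where "R = C1*C2+S1*S2"
  define G where "G = (C2-C1)^2 + (S2-S1-e*(S2*C1-S1*C2))^2"
  define M where "M = 1 + (e^2/2)*(1+R) - e*(C1+C2)"
  define U where "U = (1-(c/a)*C1)*(1-(c/a)*C2)"
  define N where "N = x1*x2/a^2 + y1*y2/b^2 - 1"
  define Ls where "Ls = (x2-x1)^2+(y2-y1)^2"
  note ch = chord_CS[OF a0 b0 cc hx1 hy1 hx2 hy2]
  have hN: "N*U = -(b^2/a^2)*(1-R)" using ch(1) unfolding N_def U_def R_def .
  have hL: "Ls*U^2 = (b^2/a)^2*G" using ch(2) unfolding Ls_def U_def G_def e_def .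
  have R1: "1 - R = ((C1-C2)^2+(S1-S2)^2)/2" unfolding R_def using un1 un2 by (simp add: field_simps; algebra)
  have R2: "(C1-C2)^2+(S1-S2)^2 > 0" using dz by (simp add: sum_power2_gt_zero_iff)
  have R3: "1 - R > 0" using R1 R2 by simp
  have "lam*(b^2/a)^2*G = lam*Ls*U^2" using hL by simp
  also have "\<dots> = a^2*b^2*(N*U)^2" using hl unfolding Ls_def N_def by (simp add: power_mult_distrib)
  also have "\<dots> = a^2*b^2*(b^2/a^2)^2*(1-R)^2" unfolding hN by (simp add: power_mult_distrib power_divide)
  also have "\<dots> = (b^2/a)^2*(b^2*(1-R)^2)" using a0 by (simp add: field_simps power2_eq_square)
  finally have "(b^2/a)^2*(lam*G) = (b^2/a)^2*(b^2*(1-R)^2)" by (simp add: ac_simps)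
  moreover have "(b^2/a)^2 \<noteq> 0" using a0 b0 by simp
  ultimately have lG: "lam*G = b^2*(1-R)^2" by (subst (asm) mult_left_cancel) auto
  have GM: "G = 2*(1-R)*M" unfolding G_def M_def R_def by (rule G_ident[OF un1 un2])
  have "(2*(1-R))*(lam*M) = (2*(1-R))*(b^2*(1-R)/2)" using lG GM by (simp add: algebra_simps power2_eq_square)
  then have lM: "lam*M = b^2*(1-R)/2" using R3 by simp
  have T: "((b^2+(c/a)^2*lam)/2)*(1+(C1*C2+S1*S2)) - ((c/a)*lam)*(C1+C2) - (b^2-lam) = 0"
  proof -
    have "((b^2+(c/a)^2*lam)/2)*(1+(C1*C2+S1*S2)) - ((c/a)*lam)*(C1+C2) - (b^2-lam) = lam*M - b^2*(1-R)/2"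
      unfolding M_def R_def e_def using a0 by (simp add: field_simps)
    then show ?thesis using lM by simp
  qed
  show ?thesis by (rule FF_of_T[OF un1 un2 T])
qed

lemma z_distinct:
  fixes a c x1 y1 x2 y2 C1 S1 C2 S2 p :: real
  assumes "x1*(1-e*C1) = a*C1 - c" "y1*(1-e*C1) = p*S1"
    and "x2*(1-e*C2) = a*C2 - c" "y2*(1-e*C2) = p*S2" and "1-e*C1 > 0"
    and "(x1,y1) \<noteq> (x2,y2)"
  shows "Complex C1 S1 \<noteq> Complex C2 S2"
proof
  assume "Complex C1 S1 = Complex C2 S2"
  then have h: "C1 = C2" "S1 = S2" by simp_all
  then have "x1*(1-e*C1) = x2*(1-e*C1)" "y1*(1-e*C1) = y2*(1-e*C1)" using assms(1-4) by simp_all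
  then have "x1 = x2" "y1 = y2" using assms(5) by simp_all
  then show False using assms(6) by simp
qed



lemma inv_form:
  fixes x y c d C S e p \<rho> :: real
  assumes d0: "d > 0" and p0: "p \<noteq> 0" and hd: "d*(1 - e*C) = p" and hx: "x + c = d*C" and hy: "y = d*S"
    and un: "C^2+S^2 = 1" and dist: "dist (x,y) (-c,0) = d"
  shows "invert (-c,0) \<rho> (x,y) = (-c + (\<rho>^2/p)*(Re (Complex C S - of_real (e/2)*(Complex C S)^2) - e/2),
                                   (\<rho>^2/p)*Im (Complex C S - of_real (e/2)*(Complex C S)^2))"
proof -
  have "invert (-c,0) \<rho> (x,y) = (-c + (\<rho>/d)^2*(x+c), (\<rho>/d)^2*y)"
    unfolding invert_def dist by simp
  also have "\<dots> = (-c + (\<rho>^2/p)*((1-e*C)*C), (\<rho>^2/p)*((1-e*C)*S))"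
  proof -
    have u0: "1 - e*C \<noteq> 0" using hd p0 by auto
    have k1: "(\<rho>^2/p)*(1-e*C) = \<rho>^2/d" unfolding hd[symmetric] using u0 d0 by (simp add: field_simps)
    have k2: "(\<rho>/d)^2*d = \<rho>^2/d" using d0 by (simp add: field_simps power2_eq_square)
    have k: "(\<rho>/d)^2*d = (\<rho>^2/p)*(1-e*C)" using k1 k2 by simp
    have "(\<rho>/d)^2*(x+c) = (\<rho>^2/p)*((1-e*C)*C)" unfolding hx using k
      by (metis mult.assoc)
    moreover have "(\<rho>/d)^2*y = (\<rho>^2/p)*((1-e*C)*S)" unfolding hy using k
      by (metis mult.assoc)
    ultimately show ?thesis by simp
  qed
  also have "\<dots> = (-c + (\<rho>^2/p)*(Re (Complex C S - of_real (e/2)*(Complex C S)^2) - e/2),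
                                   (\<rho>^2/p)*Im (Complex C S - of_real (e/2)*(Complex C S)^2))"
  proof -
    have "Re (Complex C S - of_real (e/2)*(Complex C S)^2) - e/2 = (1-e*C)*C"
    proof -
      show ?thesis using un by (simp add: power2_eq_square field_simps; algebra)
    qed
    moreover have "Im (Complex C S - of_real (e/2)*(Complex C S)^2) = (1-e*C)*S"
      by (simp add: power2_eq_square algebra_simps)
    ultimately show ?thesis by simp
  qed
  finally show ?thesis .
qed



lemma dot_pt: "(u::pt) \<bullet> v = fst u * fst v + snd u * snd v"
  by (cases u, cases v) simp

lemma invert_inj:
  fixes f P Q :: pt
  assumes "P \<noteq> f" "Q \<noteq> f" "\<rho> > 0" "invert f \<rho> P = invert f \<rho> Q"
  shows "P = Q"
proof -
  define v where "v = P - f"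
  define w where "w = Q - f"
  have v0: "norm v > 0" "norm w > 0" using assms(1,2) unfolding v_def w_def by auto
  have dv: "dist P f = norm v" "dist Q f = norm w" unfolding v_def w_def by (simp_all add: dist_norm)
  have eq: "(\<rho>/norm v)^2 *\<^sub>R v = (\<rho>/norm w)^2 *\<^sub>R w"
    using assms(4) unfolding invert_def v_def w_def by (simp add: dist_norm)
  then have "norm ((\<rho>/norm v)^2 *\<^sub>R v) = norm ((\<rho>/norm w)^2 *\<^sub>R w)" by simp
  then have "\<rho>^2/norm v = \<rho>^2/norm w" using v0 by (simp add: power2_eq_square field_simps)
  then have nn: "norm v = norm w" using assms(3) v0 by (simp add: field_simps)
  then have "v = w" using eq v0 assms(3) by simp
  then show ?thesis unfolding v_def w_def by simp
qed



lemma N_nz: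
  fixes a b c x1 y1 x2 y2 C1 S1 C2 S2 :: real
  assumes a0: "a > 0" and b0: "b > 0" and cc: "c^2 = a^2 - b^2"
    and un1: "C1^2+S1^2 = 1" and un2: "C2^2+S2^2 = 1"
    and hx1: "x1*(1-(c/a)*C1) = a*C1 - c" and hy1: "y1*(1-(c/a)*C1) = (b^2/a)*S1"
    and hx2: "x2*(1-(c/a)*C2) = a*C2 - c" and hy2: "y2*(1-(c/a)*C2) = (b^2/a)*S2"
    and dz: "(C1,S1) \<noteq> (C2,S2)"
  shows "x1*x2/a^2 + y1*y2/b^2 - 1 \<noteq> 0"
proof
  assume h: "x1*x2/a^2 + y1*y2/b^2 - 1 = 0"
  have R1: "1 - (C1*C2+S1*S2) = ((C1-C2)^2+(S1-S2)^2)/2" using un1 un2 by (simp add: field_simps; algebra)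
  have R2: "(C1-C2)^2+(S1-S2)^2 > 0" using dz by (simp add: sum_power2_gt_zero_iff)
  have "-(b^2/a^2)*(1-(C1*C2+S1*S2)) = 0" using chord_CS(1)[OF a0 b0 cc hx1 hy1 hx2 hy2] h by simp
  then show False using R1 R2 a0 b0 by simp
qed

lemma CS_distinct:
  fixes x1 y1 x2 y2 C1 S1 C2 S2 e a c p :: real
  assumes "x1*(1-e*C1) = a*C1 - c" "y1*(1-e*C1) = p*S1"
    and "x2*(1-e*C2) = a*C2 - c" "y2*(1-e*C2) = p*S2" and "1-e*C1 > 0"
    and "(x1,y1) \<noteq> (x2,y2)"
  shows "(C1,S1) \<noteq> (C2,S2)"
proof
  assume "(C1,S1) = (C2,S2)"
  then have h: "C1 = C2" "S1 = S2" by simp_all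
  then have "x1*(1-e*C1) = x2*(1-e*C1)" "y1*(1-e*C1) = y2*(1-e*C1)" using assms(1-4) by simp_all
  then have "x1 = x2" "y1 = y2" using assms(5) by simp_all
  then show False using assms(6) by simp
qed

lemma uniq_pt:
  fixes A B C H H' :: pt
  assumes "A \<noteq> B" "B \<noteq> C" "C \<noteq> A" "is_orthocenter A B C H"
    and "(H' - A) \<bullet> (B - C) = 0" "(H' - B) \<bullet> (C - A) = 0"
  shows "H = H'"
proof -
  have o1: "(H - A) \<bullet> (B - C) = 0" and o2: "(H - B) \<bullet> (C - A) = 0"
    using assms(4) unfolding is_orthocenter_def by auto
  have d1: "(H - H') \<bullet> (B - C) = 0" using o1 assms(5)
    by (metis (no_types, lifting) diff_diff_eq2 diff_self inner_diff_left diff_zero)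
  have d2: "(H - H') \<bullet> (C - A) = 0" using o2 assms(6)
    by (metis (no_types, lifting) diff_diff_eq2 diff_self inner_diff_left diff_zero)
  have "fst (H - H') = 0 \<and> snd (H - H') = 0"
  proof (rule uniq_core[of _ "fst (B - C)" _ "snd (B - C)" "fst (C - A)" "snd (C - A)" "fst (H - A)" "snd (H - A)" "fst (H - B)" "snd (H - B)"])
    show "fst (H - H') * fst (B - C) + snd (H - H') * snd (B - C) = 0" using d1 by (simp add: dot_pt)
    show "fst (H - H') * fst (C - A) + snd (H - H') * snd (C - A) = 0" using d2 by (simp add: dot_pt)
    show "fst (H - A) * fst (B - C) + snd (H - A) * snd (B - C) = 0" using o1 by (simp add: dot_pt)
    show "fst (H - B) * fst (C - A) + snd (H - B) * snd (C - A) = 0" using o2 by (simp add: dot_pt)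
    show "fst (H - A) - fst (H - B) = fst (B - C) + fst (C - A)" by simp
    show "snd (H - A) - snd (H - B) = snd (B - C) + snd (C - A)" by simp
    show "(fst (B - C), snd (B - C)) \<noteq> (0, 0)" using assms(2) by (simp add: prod_eq_iff)
    show "(fst (C - A), snd (C - A)) \<noteq> (0, 0)" using assms(3) by (simp add: prod_eq_iff)
    show "(fst (B - C) + fst (C - A), snd (B - C) + snd (C - A)) \<noteq> (0, 0)" using assms(1) by (auto simp add: prod_eq_iff)
  qed
  then show ?thesis by (simp add: prod_eq_iff)
qed


lemma dot_form:
  fixes Kc c E :: real and W g1 g2 g3 :: complex
  shows "((-c + Kc*(Re W - E), Kc*Im W) - (-c + Kc*(Re g1 - E), Kc*Im g1)) \<bullet>
         ((-c + Kc*(Re g2 - E), Kc*Im g2) - (-c + Kc*(Re g3 - E), Kc*Im g3))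
       = Kc^2*(Re (W - g1) * Re (g2 - g3) + Im (W - g1) * Im (g2 - g3))"
  by (simp add: dot_pt algebra_simps power2_eq_square)




theorem mainTheorem13:
  fixes a b \<rho> :: real and P1 P2 P3 H :: pt
  assumes "a > b" "b > 0" "\<rho> > 0"
    and "three_periodic a b P1 P2 P3"
    and "is_orthocenter
           (invert (- sqrt (a\<^sup>2 - b\<^sup>2), 0) \<rho> P1)
           (invert (- sqrt (a\<^sup>2 - b\<^sup>2), 0) \<rho> P2)
           (invert (- sqrt (a\<^sup>2 - b\<^sup>2), 0) \<rho> P3) H"
  shows "let c = sqrt (a\<^sup>2 - b\<^sup>2); \<delta> = sqrt (a^4 - a\<^sup>2 * b\<^sup>2 + b^4) in
         dist H (c * (-1 + \<rho>\<^sup>2 * ((b\<^sup>2 + \<delta>) * \<delta>) / (a\<^sup>2 * b^4)), 0)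
           = \<rho>\<^sup>2 * (c\<^sup>2 * (b\<^sup>2 + \<delta>)) / (a * b^4)"
proof -
  have a0: "a > 0" using assms(1,2) by simp
  have b0: "b > 0" using assms(2) .
  define c where "c = sqrt (a^2 - b^2)"
  define \<delta> where "\<delta> = sqrt (a^4 - a^2*b^2 + b^4)"
  have ba: "b^2 < a^2" using assms(1,2) by (intro power_strict_mono) auto
  have cc: "c^2 = a^2 - b^2" unfolding c_def using ba by (intro real_sqrt_pow2) linarith
  have c0: "c > 0" unfolding c_def using ba by simp
  have ca: "c < a"
  proof -
    have "c^2 < a^2" using cc b0 by simp
    then show ?thesis using c0 a0 by (simp add: power_less_imp_less_base less_imp_le)
  qed
  define e where "e = c/a"
  have e0: "e > 0" unfolding e_def using c0 a0 by simp
  have e1: "e < 1" unfolding e_def using ca a0 by simp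
  have eb: "1 - e^2 = b^2/a^2" unfolding e_def using cc a0 by (simp add: field_simps power2_eq_square)
  have e2: "1 - e^2 \<noteq> 0" using eb a0 b0 by simp
  define p where "p = b^2/a"
  have p0: "p > 0" unfolding p_def using a0 b0 by simp
  have on1: "on_ellipse a b P1" and on2: "on_ellipse a b P2" and on3: "on_ellipse a b P3"
    and d12: "P1 \<noteq> P2" and d23: "P2 \<noteq> P3" and d13: "P1 \<noteq> P3"
    and nb1: "normal_bisects a b P1 P2 P3" and nb2: "normal_bisects a b P2 P3 P1"
    using assms(4) unfolding three_periodic_def by auto
  obtain C1 S1 where F1: "C1^2+S1^2 = 1" "1 - (c/a)*C1 > 0"
    "fst P1 * (1 - (c/a)*C1) = a*C1 - c" "snd P1 * (1 - (c/a)*C1) = (b^2/a)*S1"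
    "dist P1 (- c, 0) * (1 - (c/a)*C1) = b^2/a"
    "fst P1 + c = dist P1 (- c, 0) * C1" "snd P1 = dist P1 (- c, 0) * S1"
    using focal_rep[OF assms(1,2) on1, folded c_def] by blast
  obtain C2 S2 where F2: "C2^2+S2^2 = 1" "1 - (c/a)*C2 > 0"
    "fst P2 * (1 - (c/a)*C2) = a*C2 - c" "snd P2 * (1 - (c/a)*C2) = (b^2/a)*S2"
    "dist P2 (- c, 0) * (1 - (c/a)*C2) = b^2/a"
    "fst P2 + c = dist P2 (- c, 0) * C2" "snd P2 = dist P2 (- c, 0) * S2"
    using focal_rep[OF assms(1,2) on2, folded c_def] by blast
  obtain C3 S3 where F3: "C3^2+S3^2 = 1" "1 - (c/a)*C3 > 0"
    "fst P3 * (1 - (c/a)*C3) = a*C3 - c" "snd P3 * (1 - (c/a)*C3) = (b^2/a)*S3"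
    "dist P3 (- c, 0) * (1 - (c/a)*C3) = b^2/a"
    "fst P3 + c = dist P3 (- c, 0) * C3" "snd P3 = dist P3 (- c, 0) * S3"
    using focal_rep[OF assms(1,2) on3, folded c_def] by blast
  have dz12: "(C1,S1) \<noteq> (C2,S2)"
    by (rule CS_distinct[OF F1(3,4) F2(3,4) F1(2)]) (use d12 in \<open>simp add: prod_eq_iff\<close>)
  have dz13: "(C1,S1) \<noteq> (C3,S3)"
    by (rule CS_distinct[OF F1(3,4) F3(3,4) F1(2)]) (use d13 in \<open>simp add: prod_eq_iff\<close>)
  have dz23: "(C2,S2) \<noteq> (C3,S3)"
    by (rule CS_distinct[OF F2(3,4) F3(3,4) F2(2)]) (use d23 in \<open>simp add: prod_eq_iff\<close>)
  (* the Joachimsthal invariant *)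
  define N :: "pt \<Rightarrow> pt \<Rightarrow> real" where "N P Q = fst P * fst Q/a^2 + snd P * snd Q/b^2 - 1" for P Q
  have Nsym: "N P Q = N Q P" for P Q unfolding N_def by (simp add: mult.commute)
  have n1: "ell_normal a b P1 \<noteq> 0" by (rule ell_normal_nz[OF on1 a0 b0])
  have n2: "ell_normal a b P2 \<noteq> 0" by (rule ell_normal_nz[OF on2 a0 b0])
  have r1: "N P1 P2 / norm (P2 - P1) = N P1 P3 / norm (P3 - P1)"
    using nb_ratio[OF nb1 n1 d12 d13] normal_dot[OF on1] a0 b0 unfolding N_def by simp
  have r2: "N P2 P3 / norm (P3 - P2) = N P2 P1 / norm (P1 - P2)"
    using nb_ratio[OF nb2 n2 d23 d12[symmetric]] normal_dot[OF on2] a0 b0 unfolding N_def by simp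
  define J where "J = N P1 P2 / norm (P2 - P1)"
  have J12: "J = N P1 P2 / norm (P2 - P1)" unfolding J_def ..
  have J13: "J = N P1 P3 / norm (P3 - P1)" using r1 unfolding J_def .
  have J23: "J = N P2 P3 / norm (P3 - P2)" using r2 Nsym[of P2 P1] unfolding J_def by (simp add: norm_minus_commute)
  define lam where "lam = a^2*b^2*J^2"
  have hl: "lam*((fst Q - fst P)^2 + (snd Q - snd P)^2) = a^2*b^2*(N P Q)^2"
    if "J = N P Q / norm (Q - P)" "P \<noteq> Q" for P Q
  proof -
    have "norm (Q - P) \<noteq> 0" using that(2) by simp
    then have "lam*(norm (Q - P))^2 = a^2*b^2*(N P Q)^2" unfolding lam_def that(1)
      by (simp add: field_simps)
    then show ?thesis unfolding norm_diff_sq .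
  qed
  have hl12: "lam*((fst P2 - fst P1)^2 + (snd P2 - snd P1)^2) = a^2*b^2*(fst P1 * fst P2/a^2 + snd P1 * snd P2/b^2 - 1)^2"
    using hl[OF J12 d12] unfolding N_def .
  have hl13: "lam*((fst P3 - fst P1)^2 + (snd P3 - snd P1)^2) = a^2*b^2*(fst P1 * fst P3/a^2 + snd P1 * snd P3/b^2 - 1)^2"
    using hl[OF J13 d13] unfolding N_def .
  have hl23: "lam*((fst P3 - fst P2)^2 + (snd P3 - snd P2)^2) = a^2*b^2*(fst P2 * fst P3/a^2 + snd P2 * snd P3/b^2 - 1)^2"
    using hl[OF J23 d23] unfolding N_def .
  have lam0: "lam > 0"
  proof -
    have "N P1 P2 \<noteq> 0" unfolding N_def by (rule N_nz[OF a0 b0 cc F1(1) F2(1) F1(3,4) F2(3,4) dz12])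
    moreover have "norm (P2 - P1) \<noteq> 0" using d12 by simp
    ultimately have "J \<noteq> 0" unfolding J_def by simp
    then show ?thesis unfolding lam_def using a0 b0 by simp
  qed
  define z1 where "z1 = Complex C1 S1"
  define z2 where "z2 = Complex C2 S2"
  define z3 where "z3 = Complex C3 S3"
  define al where "al = (b^2+(c/a)^2*lam)/2"
  define ga where "ga = (c/a)*lam"
  define be where "be = b^2 - lam"
  have FF12: "FF (of_real al) (of_real ga) (of_real be) z1 z2 = 0"
    unfolding al_def ga_def be_def z1_def z2_def by (rule pair_FF[OF a0 b0 cc F1(1) F2(1) F1(3,4) F2(3,4) dz12 hl12])
  have FF13: "FF (of_real al) (of_real ga) (of_real be) z1 z3 = 0"
    unfolding al_def ga_def be_def z1_def z3_def by (rule pair_FF[OF a0 b0 cc F1(1) F3(1) F1(3,4) F3(3,4) dz13 hl13])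
  have FF23: "FF (of_real al) (of_real ga) (of_real be) z2 z3 = 0"
    unfolding al_def ga_def be_def z2_def z3_def by (rule pair_FF[OF a0 b0 cc F2(1) F3(1) F2(3,4) F3(3,4) dz23 hl23])
  have zd12: "z1 \<noteq> z2" using dz12 unfolding z1_def z2_def by auto
  have zd13: "z1 \<noteq> z3" using dz13 unfolding z1_def z3_def by auto
  have zd23: "z2 \<noteq> z3" using dz23 unfolding z2_def z3_def by auto
  have u1: "cmod z1 = 1" unfolding z1_def using F1(1) by (simp add: complex_norm)
  have u2: "cmod z2 = 1" unfolding z2_def using F2(1) by (simp add: complex_norm)
  have u3: "cmod z3 = 1" unfolding z3_def using F3(1) by (simp add: complex_norm)
  have z1nz: "z1 \<noteq> 0" using u1 by auto
  have al0: "al > 0" unfolding al_def using b0 lam0 by (simp add: add_pos_nonneg)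
  have alnz: "complex_of_real al \<noteq> 0" using al0 by simp
  note TR = triple_rel[OF FF12 FF13 FF23 zd12 zd13 zd23 z1nz alnz]
  define q where "q = ga/al"
  have s1: "z1+z2+z3 = of_real q"
  proof -
    have "z1+z2+z3 = of_real ga / of_real al" using TR(1) alnz by (simp add: field_simps)
    then show ?thesis unfolding q_def by simp
  qed
  have s2: "z1*z2+z1*z3+z2*z3 = of_real q*(z1*z2*z3)"
  proof -
    have "z1*z2+z1*z3+z2*z3 = of_real ga / of_real al * (z1*z2*z3)" using TR(2) alnz by (simp add: field_simps)
    then show ?thesis unfolding q_def by simp
  qed
  have relr: "al^2 - ga^2 - 2*al*be = 0"
  proof -
    have "complex_of_real (al^2 - ga^2 - 2*al*be) = 0" using TR(3) by simp
    then show ?thesis by (simp only: of_real_eq_0_iff)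
  qed
  define D where "D = \<delta>/a^2"
  have dl2: "\<delta>^2 = a^4 - a^2*b^2 + b^4"
  proof -
    have "a^4 - a^2*b^2 = a^2*(a^2-b^2)" by (simp add: algebra_simps power2_eq_square power4_eq_xxxx)
    moreover have "a^2*(a^2-b^2) \<ge> 0" using ba by simp
    ultimately have "a^4 - a^2*b^2 + b^4 \<ge> 0" by simp
    then show ?thesis unfolding \<delta>_def by simp
  qed
  have dl0: "\<delta> \<ge> 0" unfolding \<delta>_def using dl2
    by (metis \<delta>_def power2_less_0 real_sqrt_ge_zero not_le real_sqrt_less_mono real_sqrt_zero)
  have D0: "D \<ge> 0" unfolding D_def using dl0 by simp
  have D2: "D^2 = 1 - e^2 + e^4"
  proof -
    have "D^2 = (a^4 - a^2*b^2 + b^4)/a^4" unfolding D_def using dl2 by (simp add: power_divide power2_eq_square power4_eq_xxxx)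
    also have "\<dots> = 1 - e^2 + e^4" unfolding e_def using a0 cc
      by (simp add: field_simps power2_eq_square power4_eq_xxxx; algebra)
    finally show ?thesis .
  qed
  have hq: "q*(b^2+e^2*lam) = 2*e*lam"
  proof -
    have "b^2+e^2*lam = 2*al" unfolding al_def e_def by simp
    then have "q*(b^2+e^2*lam) = 2*(q*al)" by simp
    also have "q*al = ga" unfolding q_def using al0 by simp
    finally show ?thesis unfolding ga_def e_def by simp
  qed
  have rel': "(b^2+e^2*lam)^2 - 4*e^2*lam^2 - 4*(b^2+e^2*lam)*(b^2-lam) = 0"
  proof -
    have "(b^2+e^2*lam)^2 - 4*e^2*lam^2 - 4*(b^2+e^2*lam)*(b^2-lam) = 4*(al^2 - ga^2 - 2*al*be)"
      unfolding al_def ga_def be_def e_def by (simp add: field_simps power2_eq_square)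
    then show ?thesis using relr by simp
  qed
  note QA = q_analysis[OF e0 e1 b0 lam0 hq rel' D0 D2]
  define Ko where "Ko = (e*(2-e*q)*(1+e^2-e*q) + (1-e^2)*e/2)/(1-e^2)"
  define Ro where "Ro = e^2*(2-e*q)/(1-e^2)"
  have hK: "(1-e^2)*Ko = e*(2-e*q)*(1+e^2-e*q) + (1-e^2)*e/2" unfolding Ko_def using e2 by simp
  have hR: "(1-e^2)*Ro = e^2*(2-e*q)" unfolding Ro_def using e2 by simp
  have enz: "e \<noteq> 0" using e0 by simp
  note oc1 = orth_core[OF u1 u2 u3 s1 s2 QA(3) enz e2 QA(1) hK hR]
  have s1': "z2+z3+z1 = of_real q" using s1 by (simp add: ac_simps)
  have s2': "z2*z3+z2*z1+z3*z1 = of_real q*(z2*z3*z1)" using s2 by (simp add: ac_simps)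
  note oc2 = orth_core[OF u2 u3 u1 s1' s2' QA(3) enz e2 QA(1) hK hR]
  define Kc where "Kc = \<rho>^2/p"
  define g1 where "g1 = z1 - of_real (e/2)*z1^2"
  define g2 where "g2 = z2 - of_real (e/2)*z2^2"
  define g3 where "g3 = z3 - of_real (e/2)*z3^2"
  have invf: "invert (-c,0) \<rho> P = (-c + Kc*(Re (Complex C S - of_real (e/2)*(Complex C S)^2) - e/2),
                                   Kc*Im (Complex C S - of_real (e/2)*(Complex C S)^2))"
    if "C^2+S^2 = 1" "1 - (c/a)*C > 0" "dist P (- c, 0) * (1 - (c/a)*C) = b^2/a"
       "fst P + c = dist P (- c, 0) * C" "snd P = dist P (- c, 0) * S" for P C S
  proof -
    have dp: "dist P (-c,0) > 0"
    proof -
      have "dist P (-c,0) * (1 - (c/a)*C) > 0" using that(3) a0 b0 by simp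
      then show ?thesis using that(2) by (simp add: zero_less_mult_iff)
    qed
    have hd: "dist P (-c,0) * (1 - e*C) = p" using that(3) unfolding e_def p_def .
    have "invert (-c,0) \<rho> P = invert (-c,0) \<rho> (fst P, snd P)" by simp
    also have "\<dots> = (-c + (\<rho>^2/p)*(Re (Complex C S - of_real (e/2)*(Complex C S)^2) - e/2),
                                   (\<rho>^2/p)*Im (Complex C S - of_real (e/2)*(Complex C S)^2))"
      by (rule inv_form[OF dp _ hd that(4) that(5) that(1)]) (use p0 in auto)
    finally show ?thesis unfolding Kc_def .
  qed
  have A1: "invert (-c,0) \<rho> P1 = (-c + Kc*(Re g1 - e/2), Kc*Im g1)"
    unfolding g1_def z1_def by (rule invf[OF F1(1) F1(2) F1(5) F1(6) F1(7)])
  have A2: "invert (-c,0) \<rho> P2 = (-c + Kc*(Re g2 - e/2), Kc*Im g2)"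
    unfolding g2_def z2_def by (rule invf[OF F2(1) F2(2) F2(5) F2(6) F2(7)])
  have A3: "invert (-c,0) \<rho> P3 = (-c + Kc*(Re g3 - e/2), Kc*Im g3)"
    unfolding g3_def z3_def by (rule invf[OF F3(1) F3(2) F3(5) F3(6) F3(7)])
  have nf: "P \<noteq> (-c,0)" if "1 - (c/a)*C > 0" "dist P (- c, 0) * (1 - (c/a)*C) = b^2/a" for P C
  proof
    assume "P = (-c,0)"
    then have "dist P (-c,0) = 0" by simp
    then show False using that(2) a0 b0 by simp
  qed
  have nf1: "P1 \<noteq> (-c,0)" by (rule nf[OF F1(2) F1(5)])
  have nf2: "P2 \<noteq> (-c,0)" by (rule nf[OF F2(2) F2(5)])
  have nf3: "P3 \<noteq> (-c,0)" by (rule nf[OF F3(2) F3(5)])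
  have Ad12: "invert (-c,0) \<rho> P1 \<noteq> invert (-c,0) \<rho> P2" using invert_inj[OF nf1 nf2 assms(3)] d12 by blast
  have Ad23: "invert (-c,0) \<rho> P2 \<noteq> invert (-c,0) \<rho> P3" using invert_inj[OF nf2 nf3 assms(3)] d23 by blast
  have Ad31: "invert (-c,0) \<rho> P3 \<noteq> invert (-c,0) \<rho> P1" using invert_inj[OF nf3 nf1 assms(3)] d13 by blast
  have orthH: "is_orthocenter (invert (-c,0) \<rho> P1) (invert (-c,0) \<rho> P2) (invert (-c,0) \<rho> P3) H"
    using assms(5) unfolding c_def by simp
  define W where "W = of_real Ko + of_real Ro*(z1*z2*z3)"
  define Hc where "Hc = (-c + Kc*(Re W - e/2), Kc*Im W)"
  have eq1: "(Hc - invert (-c,0) \<rho> P1) \<bullet> (invert (-c,0) \<rho> P2 - invert (-c,0) \<rho> P3) = 0"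
  proof -
    have "(Hc - invert (-c,0) \<rho> P1) \<bullet> (invert (-c,0) \<rho> P2 - invert (-c,0) \<rho> P3)
        = Kc^2*(Re (W - g1) * Re (g2 - g3) + Im (W - g1) * Im (g2 - g3))"
      unfolding A1 A2 A3 Hc_def by (rule dot_form)
    also have "Re (W - g1) * Re (g2 - g3) + Im (W - g1) * Im (g2 - g3) = 0"
      using oc1 unfolding W_def g1_def g2_def g3_def .
    finally show ?thesis by simp
  qed
  have eq2: "(Hc - invert (-c,0) \<rho> P2) \<bullet> (invert (-c,0) \<rho> P3 - invert (-c,0) \<rho> P1) = 0"
  proof -
    have "(Hc - invert (-c,0) \<rho> P2) \<bullet> (invert (-c,0) \<rho> P3 - invert (-c,0) \<rho> P1)
        = Kc^2*(Re (W - g2) * Re (g3 - g1) + Im (W - g2) * Im (g3 - g1))"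
      unfolding A1 A2 A3 Hc_def by (rule dot_form)
    also have "W = of_real Ko + of_real Ro*(z2*z3*z1)" unfolding W_def by (simp add: ac_simps)
    also have "Re (of_real Ko + of_real Ro*(z2*z3*z1) - g2) * Re (g3 - g1) + Im (of_real Ko + of_real Ro*(z2*z3*z1) - g2) * Im (g3 - g1) = 0"
      using oc2 unfolding g1_def g2_def g3_def .
    finally show ?thesis by simp
  qed
  have HH: "H = Hc" by (rule uniq_pt[OF Ad12 Ad23 Ad31 orthH eq1 eq2])
  define sp where "sp = z1*z2*z3"
  have sp1: "cmod sp = 1" unfolding sp_def using u1 u2 u3 by (simp add: norm_mult)
  have eqD1: "1 + e^2 - e*q = D" using QA(2) by simp
  have eqD2: "2 - e*q = 1 - e^2 + D" using QA(2) by simp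
  have bD: "1 - e^2 + D = (b^2+\<delta>)/a^2" unfolding eb D_def using a0 by (simp add: field_simps)
  have Ko2: "Ko - e/2 = e*(1-e^2+D)*D/(1-e^2)"
  proof -
    have "Ko - e/2 = e*(2-e*q)*(1+e^2-e*q)/(1-e^2)" unfolding Ko_def using e2 by (simp add: field_simps)
    then show ?thesis unfolding eqD1 eqD2 .
  qed
  have key1: "Kc*(Ko - e/2) = c*(\<rho>^2*((b^2+\<delta>)*\<delta>)/(a^2*b^4))"
  proof -
    have "Kc*(Ko - e/2) = Kc*(e*(1-e^2+D)*D/(1-e^2))" using Ko2 by simp
    also have "\<dots> = c*(\<rho>^2*((b^2+\<delta>)*\<delta>)/(a^2*b^4))"
      unfolding bD unfolding eb unfolding Kc_def p_def D_def e_def using a0 b0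
      by (simp add: field_simps power2_eq_square power4_eq_xxxx)
    finally show ?thesis .
  qed
  have key2: "Kc*Ro = \<rho>^2*(c^2*(b^2+\<delta>))/(a*b^4)"
  proof -
    have "Ro = e^2*(1-e^2+D)/(1-e^2)" unfolding Ro_def eqD2 ..
    also have "\<dots> = c^2*(b^2+\<delta>)/(a^2*b^2)" unfolding bD unfolding eb unfolding e_def using a0 b0
      by (simp add: field_simps power2_eq_square)
    finally have Ro': "Ro = c^2*(b^2+\<delta>)/(a^2*b^2)" .
    show ?thesis unfolding Ro' Kc_def p_def using a0 b0
      by (simp add: field_simps power2_eq_square power4_eq_xxxx)
  qed
  have KR0: "Kc*Ro > 0" unfolding key2 using assms(3) a0 b0 c0 dl0 by (simp add: add_pos_nonneg)
  define X0 where "X0 = c * (-1 + \<rho>^2 * ((b^2 + \<delta>) * \<delta>) / (a^2 * b^4))"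
  have fx: "fst Hc - X0 = (Kc*Ro)*Re sp"
  proof -
    have "fst Hc - X0 = Kc*(Ko - e/2) + Kc*Ro*Re sp - c*(\<rho>^2*((b^2+\<delta>)*\<delta>)/(a^2*b^4))"
      unfolding Hc_def W_def X0_def sp_def by (simp add: algebra_simps)
    then show ?thesis unfolding key1 by simp
  qed
  have fy: "snd Hc = (Kc*Ro)*Im sp" unfolding Hc_def W_def sp_def by simp
  have fin: "dist H (X0, 0) = \<rho>^2*(c^2*(b^2+\<delta>))/(a*b^4)"
  proof -
    have "dist H (X0,0) = sqrt ((fst Hc - X0)^2 + (snd Hc)^2)" unfolding HH
      by (cases Hc) (simp add: dist_Pair_Pair dist_real_def)
    also have "\<dots> = sqrt ((Kc*Ro)^2 * ((Re sp)^2 + (Im sp)^2))" unfolding fx fy by (simp add: algebra_simps power_mult_distrib)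
    also have "(Re sp)^2 + (Im sp)^2 = 1" using sp1 unfolding cmod_def by simp
    also have "sqrt ((Kc*Ro)^2 * 1) = Kc*Ro" using KR0 by simp
    finally show ?thesis unfolding key2 .
  qed
  show ?thesis using fin unfolding Let_def X0_def c_def \<delta>_def .
qed

end
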